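(* Let $R$ be an exchange ring and $\alpha=[a_1\ a_2\ \cdots\ a_n]$ a right unimodular row over $R$ (i.e. $a_1R+\cdots+a_nR=R$), with $n\ge 2$. Then $\alpha$ can be transformed by a finite sequence of elementary column operations to a row $[c_1\ c_2\ \cdots\ c_n]$ such that $c_2$ is a (von Neumann) regular element, $c_2\in Ra_2$, and $c_2R=(1-g)R$ for some idempotent $g\in R$ with $RgR=R$.
   Context: All rings are unital. A ring $R$ is an exchange ring if for every $a\in R$ there is an idempotent $e\in aR$ with $1-e\in(1-a)R$ (equivalently, $R_R$ has the finite exchange property). An element $x\in R$ is regular if $xyx=x$ for some $y\in R$. An elementary column operation on a row $[c_1\ \cdots\ c_n]$ replaces some entry $c_i$ by $c_i+c_jr$ for some $j\neq i$ and $r\in R$. *)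

theory Defs
  imports Main
begin

definition exchange_ring :: "'a::ring_1 itself \<Rightarrow> bool" where
  "exchange_ring _ \<longleftrightarrow>
     (\<forall>a::'a. \<exists>e. e * e = e \<and> (\<exists>r. e = a * r) \<and> (\<exists>s. 1 - e = (1 - a) * s))"

definition idempotent :: "'a::ring_1 \<Rightarrow> bool" where
  "idempotent e \<longleftrightarrow> e * e = e"

definition regular_elem :: "'a::ring_1 \<Rightarrow> bool" where
  "regular_elem x \<longleftrightarrow> (\<exists>y. x * y * x = x)"

definition right_unimodular :: "'a::ring_1 list \<Rightarrow> bool" where
  "right_unimodular as \<longleftrightarrow>
     (\<exists>rs. length rs = length as \<and> (\<Sum>i<length as. as ! i * rs ! i) = 1)"

definition elem_col_op :: "'a::ring_1 list \<Rightarrow> 'a list \<Rightarrow> bool" where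
  "elem_col_op xs ys \<longleftrightarrow>
     (\<exists>i j r. i < length xs \<and> j < length xs \<and> i \<noteq> j \<and>
              ys = xs[i := xs ! i + xs ! j * r])"

definition right_ideal_gen :: "'a::ring_1 \<Rightarrow> 'a set" where
  "right_ideal_gen x = {x * r | r. True}"

definition two_sided_ideal_gen :: "'a::ring_1 \<Rightarrow> 'a set" where
  "two_sided_ideal_gen g = {sum_list (map (\<lambda>(x, y). x * g * y) ps) | ps. True}"

end

theory Submission
  imports Defs
begin
lemma ecop:
  fixes xs :: "'a::ring_1 list"
  shows "i < length xs \<Longrightarrow> j < length xs \<Longrightarrow> i \<noteq> j \<Longrightarrow> elem_col_op xs (xs[i := xs!i + xs!j * r])"
  unfolding elem_col_op_def by blast

lemma add_comb:
  fixes xs :: "'a::ring_1 list"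
  assumes "i < length xs" "m \<le> length xs"
  shows "elem_col_op\<^sup>*\<^sup>* xs (xs[i := xs!i + (\<Sum>j<m. if j = i then 0 else xs!j * t j)])"
  using assms(2)
proof (induction m)
  case 0
  then show ?case by simp
next
  case (Suc m)
  define ys where "ys = xs[i := xs!i + (\<Sum>j<m. if j = i then 0 else xs!j * t j)]"
  have IH: "elem_col_op\<^sup>*\<^sup>* xs ys" using Suc unfolding ys_def by simp
  have len: "length ys = length xs" by (simp add: ys_def)
  have ysi: "ys ! i = xs!i + (\<Sum>j<m. if j = i then 0 else xs!j * t j)" using assms(1) by (simp add: ys_def)
  show ?case
  proof (cases "m = i")
    case True
    then show ?thesis using IH unfolding ys_def by simp
  next
    case False
    have ysm: "ys ! m = xs ! m" using False by (simp add: ys_def)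
    have A: "elem_col_op ys (ys[i := ys!i + ys!m * t m])"
      using ecop[of i ys m "t m"] Suc.prems assms(1) False len by simp
    have B: "ys[i := ys!i + ys!m * t m] = xs[i := xs!i + (\<Sum>j<Suc m. if j = i then 0 else xs!j * t j)]"
      using False unfolding ysi ysm by (simp add: ys_def add.assoc)
    have "elem_col_op ys (xs[i := xs!i + (\<Sum>j<Suc m. if j = i then 0 else xs!j * t j)])"
      using A unfolding B .
    then show ?thesis by (rule rtranclp.rtrancl_into_rtrancl[OF IH])
  qed
qed

lemma mod_others:
  fixes xs :: "'a::ring_1 list"
  assumes "i < length xs" "m \<le> length xs"
  shows "elem_col_op\<^sup>*\<^sup>* xs (map (\<lambda>j. if j < m \<and> j \<noteq> i then xs!j + xs!i * w j else xs!j) [0..<length xs])"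
  using assms(2)
proof (induction m)
  case 0
  then show ?case by (simp add: map_nth)
next
  case (Suc m)
  define ys where "ys = map (\<lambda>j. if j < m \<and> j \<noteq> i then xs!j + xs!i * w j else xs!j) [0..<length xs]"
  have IH: "elem_col_op\<^sup>*\<^sup>* xs ys" using Suc unfolding ys_def by simp
  have len: "length ys = length xs" by (simp add: ys_def)
  have ysi: "ys ! i = xs ! i" using assms(1) by (simp add: ys_def)
  show ?case
  proof (cases "m = i")
    case True
    have "ys = map (\<lambda>j. if j < Suc m \<and> j \<noteq> i then xs!j + xs!i * w j else xs!j) [0..<length xs]"
      unfolding ys_def using True by (intro map_cong refl) (auto simp: less_Suc_eq)
    then show ?thesis using IH by simp
  next
    case False
    have ysm: "ys ! m = xs ! m" using False Suc.prems by (simp add: ys_def)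
    have A: "elem_col_op ys (ys[m := ys!m + ys!i * w m])"
      using ecop[of m ys i "w m"] Suc.prems assms(1) False len by simp
    have B: "ys[m := ys!m + ys!i * w m] = map (\<lambda>j. if j < Suc m \<and> j \<noteq> i then xs!j + xs!i * w j else xs!j) [0..<length xs]"
      unfolding ysi ysm
    proof (rule nth_equalityI)
      show "length (ys[m := xs ! m + xs ! i * w m]) = length (map (\<lambda>j. if j < Suc m \<and> j \<noteq> i then xs!j + xs!i * w j else xs!j) [0..<length xs])"
        by (simp add: len)
      fix j assume "j < length (ys[m := xs ! m + xs ! i * w m])"
      then have j: "j < length xs" by (simp add: len)
      show "ys[m := xs ! m + xs ! i * w m] ! j = map (\<lambda>j. if j < Suc m \<and> j \<noteq> i then xs!j + xs!i * w j else xs!j) [0..<length xs] ! j"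
      proof (cases "j = m")
        case True
        then show ?thesis using j False len by simp
      next
        case False
        then show ?thesis using j len by (simp add: ys_def less_Suc_eq)
      qed
    qed
    have "elem_col_op ys (map (\<lambda>j. if j < Suc m \<and> j \<noteq> i then xs!j + xs!i * w j else xs!j) [0..<length xs])"
      using A unfolding B .
    then show ?thesis by (rule rtranclp.rtrancl_into_rtrancl[OF IH])
  qed
qed

lemma sum_split1:
  fixes g :: "nat \<Rightarrow> 'a::comm_monoid_add"
  assumes "i < n"
  shows "(\<Sum>j<n. g j) = g i + (\<Sum>j<n. if j = i then 0 else g j)"
proof -
  have "(\<Sum>j<n. g j) = (\<Sum>j<n. (if j = i then g j else 0) + (if j = i then 0 else g j))"
    by (intro sum.cong) auto
  also have "\<dots> = g i + (\<Sum>j<n. if j = i then 0 else g j)"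
    using assms by (simp add: sum.distrib)
  finally show ?thesis .
qed

theorem corollary2p6:
  fixes as :: "'a::ring_1 list"
  assumes "exchange_ring TYPE('a)"
    and "right_unimodular as"
    and "length as \<ge> 2"
  shows "\<exists>cs. elem_col_op\<^sup>*\<^sup>* as cs \<and>
           regular_elem (cs ! 1) \<and>
           (\<exists>t. cs ! 1 = t * as ! 1) \<and>
           (\<exists>g. idempotent g \<and> two_sided_ideal_gen g = UNIV \<and>
                right_ideal_gen (cs ! 1) = right_ideal_gen (1 - g))"
proof -
  define n where "n = length as"
  define a where "a = as ! 1"
  have n1: "1 < n" "0 < n" using assms(3) n_def by auto
  have exch: "\<And>x::'a. \<exists>e r s. e * e = e \<and> e = x * r \<and> 1 - e = (1 - x) * s"
    using assms(1) unfolding exchange_ring_def by blast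
  from assms(2) obtain rs where rs: "length rs = n" "(\<Sum>i<n. as!i * rs!i) = 1"
    unfolding right_unimodular_def n_def by blast
  define s where "s = (\<Sum>j<n. if j = 1 then 0 else as!j * rs!j)"
  have as1: "a * rs!1 + s = 1"
    using sum_split1[of 1 n "\<lambda>i. as!i * rs!i"] rs n1 unfolding s_def a_def by simp
  obtain e r s' where e: "e * e = e" "e = a * rs!1 * r" "1 - e = (1 - a * rs!1) * s'"
    using exch by blast
  define q where "q = rs!1 * r"
  have eq: "e = a * q" using e(2) by (simp add: q_def mult.assoc)
  define f where "f = 1 - e"
  define p where "p j = rs!j * s'" for j
  have fsum: "(\<Sum>j<n. if j = 1 then 0 else as!j * p j) = f"
  proof -
    have s1: "s = 1 - a * rs!1" using as1 by (simp add: eq_diff_eq add.commute)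
    have "f = s * s'" unfolding f_def e(3) s1 ..
    also have "\<dots> = (\<Sum>j<n. (if j = 1 then 0 else as!j * rs!j) * s')"
      unfolding s_def by (simp add: sum_distrib_right)
    also have "\<dots> = (\<Sum>j<n. if j = 1 then 0 else as!j * p j)"
      by (intro sum.cong) (auto simp: p_def mult.assoc)
    finally show ?thesis by simp
  qed
  have ff: "f * f = f" using e(1) by (simp add: f_def algebra_simps)
  have ef: "e * f = 0" using e(1) by (simp add: f_def algebra_simps)
  have fe: "f * e = 0" using e(1) by (simp add: f_def algebra_simps)
  have ef': "e * (f * x) = 0" for x by (simp add: ef flip: mult.assoc)
  have fe': "f * (e * x) = 0" for x by (simp add: fe flip: mult.assoc)
  have ee': "e * (e * x) = e * x" for x by (simp add: e(1) flip: mult.assoc)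
  have ff': "f * (f * x) = f * x" for x by (simp add: ff flip: mult.assoc)
  define w where "w j = q * ((if j = 0 then 1 else 0) - as!j)" for j
  define ds where "ds = map (\<lambda>j. if j < n \<and> j \<noteq> 1 then as!j + as!1 * w j else as!j) [0..<n]"
  have r1: "elem_col_op\<^sup>*\<^sup>* as ds"
    using mod_others[of 1 as n w] n1 unfolding ds_def n_def by simp
  have dslen: "length ds = n" by (simp add: ds_def)
  have ds1: "ds!1 = a" using n1 by (simp add: ds_def a_def)
  have dsj: "ds!j = f * as!j + (if j = 0 then e else 0)" if "j < n" "j \<noteq> 1" for j
    using that by (simp add: ds_def w_def eq f_def a_def algebra_simps)
  define Y where "Y = f * as!0 * e"
  define h1 where "h1 = e + Y"
  have eY: "e * Y = 0" by (simp add: Y_def mult.assoc ef')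
  have Ye: "Y * e = Y" by (simp add: Y_def mult.assoc e(1))
  have YY: "Y * Y = 0" by (simp add: Y_def mult.assoc ef')
  have fY: "f * Y = Y" by (simp add: Y_def mult.assoc ff')
  have fY': "f * (Y * x) = Y * x" for x by (simp add: fY flip: mult.assoc)
  have h1idem: "h1 * h1 = h1"
    by (simp add: h1_def algebra_simps e(1) eY Ye YY)
  have ds0e: "ds!0 * e = h1"
    using n1 by (simp add: dsj h1_def Y_def algebra_simps e(1))
  define u where "u = f - Y * p 0"
  define p' where "p' j = (if j = 0 then f * p 0 else p j)" for j
  have usum: "(\<Sum>j<n. if j = 1 then 0 else ds!j * p' j) = u"
  proof -
    have "(\<Sum>j<n. if j = 1 then 0 else ds!j * p' j)
        = (\<Sum>j<n. f * (if j = 1 then 0 else as!j * p j) - (if j = 0 then Y * p 0 else 0))"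
    proof (intro sum.cong refl)
      fix j assume j: "j \<in> {..<n}"
      show "(if j = 1 then 0 else ds!j * p' j) = f * (if j = 1 then 0 else as!j * p j) - (if j = 0 then Y * p 0 else 0)"
      proof (cases "j = 0")
        case True
        have "ds!0 * (f * p 0) = f * as!0 * f * p 0" using n1 by (simp add: dsj algebra_simps ef')
        also have "\<dots> = f * (as!0 * p 0) - Y * p 0" by (simp add: f_def Y_def algebra_simps)
        finally show ?thesis using True by (simp add: p'_def)
      next
        case False
        then show ?thesis using j by (simp add: dsj p'_def mult.assoc)
      qed
    qed
    also have "\<dots> = f * (\<Sum>j<n. if j = 1 then 0 else as!j * p j) - Y * p 0"
      using n1 by (simp add: sum_subtractf sum_distrib_left)
    also have "\<dots> = u" by (simp only: fsum ff u_def)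
    finally show ?thesis .
  qed
  have fu: "f * u = u" by (simp add: u_def algebra_simps ff fY flip: mult.assoc)
  have eu: "e * u = 0"
  proof -
    have "e * u = e * (f * u)" using fu by simp
    also have "\<dots> = 0" by (rule ef')
    finally show ?thesis .
  qed
  obtain k r' s'' where k: "k * k = k" "k = u * r'" "1 - k = (1 - u) * s''"
    using exch by blast
  have ek: "e * k = 0" using k(2) eu by (simp flip: mult.assoc)
  have fk: "f * k = k" using ek by (simp add: f_def algebra_simps)
  have Yk: "Y * k = 0"
  proof -
    have "Y * k = Y * e * k" using Ye by simp
    also have "\<dots> = 0" by (simp add: mult.assoc ek)
    finally show ?thesis .
  qed
  have h1k: "h1 * k = 0" by (simp add: h1_def algebra_simps ek Yk)
  define h where "h = h1 + k - k * h1"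
  have hh1: "h * h1 = h1" by (simp add: h_def algebra_simps h1idem)
  have hk: "h * k = k" by (simp add: h_def algebra_simps k(1) h1k)
  have hidem: "h * h = h"
  proof -
    have "h * h = h * h1 + h * k - h * k * h1" by (simp add: h_def algebra_simps)
    also have "\<dots> = h" using hh1 hk by (simp add: h_def)
    finally show ?thesis .
  qed
  define t where "t j = (if j = 0 then e * a else 0) + p' j * (r' * (1 - h1) * a)" for j
  have hsum: "(\<Sum>j<n. if j = 1 then 0 else ds!j * t j) = h * a"
  proof -
    have "(\<Sum>j<n. if j = 1 then 0 else ds!j * t j)
       = (\<Sum>j<n. (if j = 0 then ds!0 * e * a else 0) + (if j = 1 then 0 else ds!j * p' j) * (r' * (1 - h1) * a))"
      by (intro sum.cong refl) (auto simp: t_def algebra_simps)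
    also have "\<dots> = ds!0 * e * a + u * (r' * (1 - h1) * a)"
      using n1 by (simp add: sum.distrib usum[simplified] flip: sum_distrib_right)
    also have "\<dots> = h * a" using k(2) ds0e by (simp add: h_def algebra_simps)
    finally show ?thesis .
  qed
  define cs where "cs = ds[1 := ds!1 + (\<Sum>j<length ds. if j = 1 then 0 else ds!j * (- t j))]"
  have r2: "elem_col_op\<^sup>*\<^sup>* ds cs"
    unfolding cs_def using add_comb[of 1 ds "length ds" "\<lambda>j. - t j"] n1 dslen by simp
  have cs1: "cs ! 1 = (1 - h) * a"
  proof -
    have "(\<Sum>j<n. if j = 1 then 0 else ds!j * (- t j)) = - (\<Sum>j<n. if j = 1 then 0 else ds!j * t j)"
      by (simp add: sum_negf[symmetric] if_distrib cong: if_cong)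
    then show ?thesis using n1 dslen hsum[simplified] ds1 by (simp add: cs_def algebra_simps)
  qed
  define m where "m = q - q * p 0 * s''"
  define nn where "nn = k + h1 * p 0 * s''"
  have Ykey: "Y * p 0 * s'' = f - k"
  proof -
    have "f - k = f * (1 - k)" by (simp add: algebra_simps fk)
    also have "\<dots> = f * (1 - u) * s''" by (simp add: k(3) mult.assoc)
    also have "\<dots> = Y * p 0 * s''" by (simp add: algebra_simps u_def ff' fY')
    finally show ?thesis by simp
  qed
  have key: "a * m + h * nn = 1"
  proof -
    have "a * m = e - e * p 0 * s''" by (simp add: m_def eq algebra_simps)
    moreover have "h * nn = k + h1 * p 0 * s''" by (simp add: nn_def algebra_simps hk hh1 flip: mult.assoc)
    ultimately have "a * m + h * nn = e + k + Y * p 0 * s''" by (simp add: h1_def algebra_simps)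
    then show ?thesis using Ykey by (simp add: f_def)
  qed
  have cm: "(1 - h) * a * m = 1 - h"
  proof -
    have am: "a * m = 1 - h * nn" using key by (simp add: eq_diff_eq)
    have "(1 - h) * a * m = (1 - h) * (a * m)" by (simp only: mult.assoc)
    also have "\<dots> = (1 - h) * (1 - h * nn)" by (simp only: am)
    finally have "(1 - h) * a * m = (1 - h) * (1 - h * nn)" .
    also have "\<dots> = 1 - h" by (simp add: algebra_simps hidem flip: mult.assoc)
    finally show ?thesis .
  qed
  have reg: "regular_elem (cs ! 1)"
    unfolding regular_elem_def cs1
  proof (intro exI[of _ m])
    have "(1 - h) * a * m * ((1 - h) * a) = (1 - h) * ((1 - h) * a)" by (simp add: cm)
    also have "\<dots> = (1 - h) * a" by (simp add: algebra_simps hidem flip: mult.assoc)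
    finally show "(1 - h) * a * m * ((1 - h) * a) = (1 - h) * a" .
  qed
  have full: "two_sided_ideal_gen h = UNIV"
  proof -
    have eh1: "e * h1 = e" by (simp add: h1_def algebra_simps e(1) eY)
    have fh1: "f * h1 = Y" by (simp add: h1_def algebra_simps fe fY)
    have "z \<in> two_sided_ideal_gen h" for z
    proof -
      have "sum_list (map (\<lambda>(x, y). x * h * y) [(e, h1 * z), (1, k * z), (f, h1 * p 0 * s'' * z)])
            = e * (h * h1) * z + (h * k) * z + f * (h * h1) * p 0 * s'' * z"
        by (simp add: mult.assoc)
      also have "\<dots> = (e + k + Y * p 0 * s'') * z"
        by (simp add: hh1 hk eh1 fh1 algebra_simps flip: mult.assoc)
      also have "\<dots> = z" using Ykey by (simp add: f_def)
      finally have "z = sum_list (map (\<lambda>(x, y). x * h * y) [(e, h1 * z), (1, k * z), (f, h1 * p 0 * s'' * z)])" by simp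
      then show ?thesis unfolding two_sided_ideal_gen_def by blast
    qed
    then show ?thesis by blast
  qed
  have rid: "right_ideal_gen (cs ! 1) = right_ideal_gen (1 - h)"
    unfolding right_ideal_gen_def cs1
  proof (intro set_eqI iffI)
    fix x assume "x \<in> {(1 - h) * a * r |r. True}"
    then obtain r0 where "x = (1 - h) * a * r0" by blast
    then have "x = (1 - h) * (a * r0)" by (simp add: mult.assoc)
    then show "x \<in> {(1 - h) * r |r. True}" by blast
  next
    fix x assume "x \<in> {(1 - h) * r |r. True}"
    then obtain r0 where "x = (1 - h) * r0" by blast
    moreover have "(1 - h) * a * (m * r0) = (1 - h) * r0" proof -
      have "(1 - h) * a * (m * r0) = ((1 - h) * a * m) * r0" by (simp only: mult.assoc)
      then show ?thesis using cm by simp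
    qed
    ultimately have "x = (1 - h) * a * (m * r0)" by simp
    then show "x \<in> {(1 - h) * a * r |r. True}" by blast
  qed
  have r12: "elem_col_op\<^sup>*\<^sup>* as cs" using r1 r2 by (rule rtranclp_trans)
  have tt: "\<exists>t. cs ! 1 = t * as ! 1" using cs1 unfolding a_def by blast
  have gg: "\<exists>g. idempotent g \<and> two_sided_ideal_gen g = UNIV \<and>
                right_ideal_gen (cs ! 1) = right_ideal_gen (1 - g)"
    using full rid hidem unfolding idempotent_def by blast
  show ?thesis using r12 reg tt gg by blast
qed

end
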